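(* Let $d\ge1$ and let $\|\cdot\|$ be a norm on $\mathbb{R}^d$. Let $A\in\mathcal{B}(\mathbb{R}^d)$ and $a_1\in A$, with $A$ star-shaped relative to $a_1$ and $$\mathfrak{p}(A,\|\cdot-a_1\|):=\inf\Big\{\frac{\lambda_d(B(x,t)\cap A)}{\lambda_d(B(x,t))}:\ x\in A,\ 0<t\le\|x-a_1\|\Big\}>0.$$ Let $\nu=f\cdot\lambda_d$ be a probability measure on $\mathbb{R}^d$ where $f$ is almost radial non-increasing on $A$ with respect to $a_1$, with associated norm $\|\cdot\|_0$ and constant $M\in(0,1]$, and let $C_0\in[1,+\infty)$ satisfy $\frac1{C_0}\|x\|_0\le\|x\|\le C_0\|x\|_0$ for every $x\in\mathbb{R}^d$. Then for every $x\in A$ and every $t\in(0,\|x-a_1\|]$, $$\nu(B(x,t))\ge M\,\mathfrak{p}(A,\|\cdot-a_1\|)\,(2C_0^2)^{-d}\,V_d\,f(x)\,t^d.$$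
   Context: $B(x,t)=\{y:\|y-x\|\le t\}$, $\lambda_d$ Lebesgue measure, $V_d=\lambda_d(B(0,1))$. A function $f:\mathbb{R}^d\to\mathbb{R}_+$ is almost radial non-increasing on $A$ with respect to $a\in A$ if there exist a norm $\|\cdot\|_0$ on $\mathbb{R}^d$ and a constant $M\in(0,1]$ such that for all $x,y\in A\setminus\{a\}$ with $\|y-a\|_0\le\|x-a\|_0$, one has $f(y)\ge Mf(x)$. *)

theory Defs
  imports "HOL-Analysis.Analysis"
begin

definition is_norm :: "('a::real_vector \<Rightarrow> real) \<Rightarrow> bool" where
  "is_norm N \<longleftrightarrow>
     (\<forall>x. 0 \<le> N x) \<and> (\<forall>x. N x = 0 \<longleftrightarrow> x = 0) \<and>
     (\<forall>c x. N (c *\<^sub>R x) = \<bar>c\<bar> * N x) \<and> (\<forall>x y. N (x + y) \<le> N x + N y)"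

definition nball :: "('a::real_vector \<Rightarrow> real) \<Rightarrow> 'a \<Rightarrow> real \<Rightarrow> 'a set" where
  "nball N x t = {y. N (y - x) \<le> t}"

definition unit_ball_vol :: "('a::euclidean_space \<Rightarrow> real) \<Rightarrow> real" where
  "unit_ball_vol N = measure lborel (nball N 0 1)"

definition star_shaped_rel :: "'a::real_vector set \<Rightarrow> 'a \<Rightarrow> bool" where
  "star_shaped_rel A a \<longleftrightarrow> a \<in> A \<and> (\<forall>x\<in>A. closed_segment a x \<subseteq> A)"

definition frak_p :: "'a::euclidean_space set \<Rightarrow> ('a \<Rightarrow> real) \<Rightarrow> 'a \<Rightarrow> real" where
  "frak_p A N a = Inf {measure lborel (nball N x t \<inter> A) / measure lborel (nball N x t) | x t.
                         x \<in> A \<and> 0 < t \<and> t \<le> N (x - a)}"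

definition almost_radial_noninc ::
  "('a::real_vector \<Rightarrow> real) \<Rightarrow> 'a set \<Rightarrow> 'a \<Rightarrow> ('a \<Rightarrow> real) \<Rightarrow> real \<Rightarrow> bool" where
  "almost_radial_noninc f A a N0 M \<longleftrightarrow>
     is_norm N0 \<and> 0 < M \<and> M \<le> 1 \<and>
     (\<forall>x\<in>A - {a}. \<forall>y\<in>A - {a}. N0 (y - a) \<le> N0 (x - a) \<longrightarrow> f y \<ge> M * f x)"

end

theory Submission
  imports Defs
begin

lemma is_norm_sum:
  assumes "is_norm N" "finite F"
  shows "N (sum g F) \<le> (\<Sum>i\<in>F. N (g i))"
  using assms(2)
proof (induction F rule: finite_induct)
  case empty
  then show ?case using assms(1) unfolding is_norm_def by (metis order_refl sum.empty)
next
  case (insert x F)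
  then show ?case using assms(1) unfolding is_norm_def
    by (smt (verit) sum.insert)
qed

lemma is_norm_bound:
  fixes N :: "'a::euclidean_space \<Rightarrow> real"
  assumes "is_norm N"
  shows "N x \<le> (\<Sum>b\<in>Basis. N b) * norm x"
proof -
  have "N x = N (\<Sum>b\<in>Basis. (x \<bullet> b) *\<^sub>R b)" by (simp add: euclidean_representation)
  also have "\<dots> \<le> (\<Sum>b\<in>Basis. N ((x \<bullet> b) *\<^sub>R b))" by (rule is_norm_sum[OF assms]) simp
  also have "\<dots> = (\<Sum>b\<in>Basis. \<bar>x \<bullet> b\<bar> * N b)" using assms unfolding is_norm_def by simp
  also have "\<dots> \<le> (\<Sum>b\<in>Basis. norm x * N b)"
    apply (rule sum_mono) apply (rule mult_right_mono)
    using assms Basis_le_norm unfolding is_norm_def by auto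
  finally show ?thesis by (simp add: sum_distrib_left mult.commute)
qed

lemma is_norm_minus:
  assumes "is_norm N" shows "N (- x) = N x"
  using assms unfolding is_norm_def by (metis abs_minus_cancel abs_one mult_1 scaleR_minus1_left)

lemma is_norm_cont:
  fixes N :: "'a::euclidean_space \<Rightarrow> real"
  assumes "is_norm N"
  shows "continuous_on UNIV N"
proof -
  define K where "K = (\<Sum>b\<in>Basis. N b)"
  have "\<bar>N x - N y\<bar> \<le> K * dist x y" for x y
  proof -
    have "N (y + (x - y)) \<le> N y + N (x - y)" using assms unfolding is_norm_def by blast
    then have "N x \<le> N y + N (x - y)" by simp
    moreover have "N (x + (y - x)) \<le> N x + N (y - x)" using assms unfolding is_norm_def by blast
    then have "N y \<le> N x + N (y - x)" by simp
    moreover have "N (y - x) = N (x - y)" using is_norm_minus[OF assms, of "x - y"] by simp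
    moreover have "N (x - y) \<le> K * dist x y" using is_norm_bound[OF assms] by (simp add: K_def dist_norm)
    ultimately show ?thesis by linarith
  qed
  moreover have "0 \<le> K" unfolding K_def using assms unfolding is_norm_def by (simp add: sum_nonneg)
  ultimately have "K-lipschitz_on UNIV N"
    by (intro lipschitz_onI) (auto simp: dist_real_def)
  then show ?thesis by (rule lipschitz_on_continuous_on)
qed

lemma nball_borel:
  fixes N :: "'a::euclidean_space \<Rightarrow> real"
  assumes "is_norm N" shows "nball N x t \<in> sets borel"
proof -
  have "continuous_on UNIV (\<lambda>y. N (y - x))"
    by (intro continuous_on_compose2[OF is_norm_cont[OF assms]] continuous_intros) auto
  then have "closed (nball N x t)" unfolding nball_def
    by (intro closed_Collect_le) auto
  then show ?thesis by simp
qed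
theorem lemma2p10:
  fixes N N0 :: "'a::euclidean_space \<Rightarrow> real"
    and A :: "'a set" and a1 :: 'a
    and f :: "'a \<Rightarrow> real" and M C0 :: real
  assumes "is_norm N"
    and "A \<in> sets borel" and "a1 \<in> A"
    and "star_shaped_rel A a1"
    and "frak_p A N a1 > 0"
    and "\<And>x. 0 \<le> f x" and "f \<in> borel_measurable borel"
    and "emeasure (density lborel (\<lambda>x. ennreal (f x))) UNIV = 1"
    and "almost_radial_noninc f A a1 N0 M"
    and "C0 \<ge> 1"
    and "\<And>x. N0 x / C0 \<le> N x \<and> N x \<le> C0 * N0 x"
  shows "\<forall>x\<in>A. \<forall>t. 0 < t \<and> t \<le> N (x - a1) \<longrightarrow>
           measure (density lborel (\<lambda>x. ennreal (f x))) (nball N x t)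
             \<ge> M * frak_p A N a1 * (2 * C0\<^sup>2) powr (- real DIM('a))
                 * unit_ball_vol N * f x * t ^ DIM('a)"
proof (intro ballI allI impI, elim conjE)
  fix x t assume xA: "x \<in> A" and t0: "0 < t" and tle: "t \<le> N (x - a1)"
  note nN = assms(1)
  have N0: "\<And>v. 0 \<le> N v" "\<And>v. N v = 0 \<longleftrightarrow> v = 0" "\<And>c v. N (c *\<^sub>R v) = \<bar>c\<bar> * N v"
    "\<And>v w. N (v + w) \<le> N v + N w" using nN unfolding is_norm_def by auto
  have ar: "is_norm N0" "0 < M" "M \<le> 1"
    "\<And>z w. z \<in> A - {a1} \<Longrightarrow> w \<in> A - {a1} \<Longrightarrow> N0 (w - a1) \<le> N0 (z - a1) \<Longrightarrow> f w \<ge> M * f z"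
    using assms(9) unfolding almost_radial_noninc_def by auto
  have M0: "\<And>v. 0 \<le> N0 v" "\<And>c v. N0 (c *\<^sub>R v) = \<bar>c\<bar> * N0 v"
    "\<And>v w. N0 (v + w) \<le> N0 v + N0 w" using ar(1) unfolding is_norm_def by auto
  have C0: "C0 \<ge> 1" by fact
  have eq1: "N0 v \<le> C0 * N v" for v using assms(11)[of v] C0 by (simp add: divide_le_eq mult.commute)
  have eq2: "N v \<le> C0 * N0 v" for v using assms(11)[of v] by simp
  define d where "d = DIM('a)"
  define u where "u = x - a1"
  define \<tau> where "\<tau> = N u"
  define s where "s = t / (2 * C0\<^sup>2)"
  define l where "l = t / (2 * \<tau>)"
  define y where "y = a1 + (1 - l) *\<^sub>R u"
  define p where "p = frak_p A N a1"
  define V where "V = unit_ball_vol N"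
  define \<nu> where "\<nu> = density lborel (\<lambda>x. ennreal (f x))"
  have \<tau>pos: "0 < \<tau>" using t0 tle unfolding \<tau>_def u_def by simp
  have C02: "1 \<le> C0\<^sup>2" using C0 by (simp add: one_le_power)
  have s0: "0 < s" unfolding s_def using t0 C0 by simp
  have st: "s \<le> t / 2" unfolding s_def using t0 C02
    by (simp add: divide_le_eq field_simps)
  have l0: "0 < l" "l \<le> 1/2" unfolding l_def using t0 \<tau>pos tle by (auto simp: u_def \<tau>_def divide_le_eq)
  have ltau: "l * \<tau> = t / 2" unfolding l_def using \<tau>pos by simp
  have xa: "x \<noteq> a1"
  proof
    assume "x = a1"
    then have "\<tau> = 0" using N0(2)[of 0] by (simp add: \<tau>_def u_def)
    then show False using \<tau>pos by simp
  qed
  have yA: "y \<in> A"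
  proof -
    have "y \<in> closed_segment a1 x" unfolding closed_segment_def y_def u_def
      apply (rule CollectI, rule exI[of _ "1 - l"]) using l0 by (auto simp: algebra_simps)
    then show ?thesis using assms(4) xA unfolding star_shaped_rel_def by blast
  qed
  have Nya: "N (y - a1) = (1 - l) * \<tau>" unfolding y_def \<tau>_def using N0(3) l0 by simp
  have "(1/2) * \<tau> \<le> (1 - l) * \<tau>" using l0 \<tau>pos by (intro mult_right_mono) auto
  then have sy: "s \<le> N (y - a1)" using Nya st tle \<tau>_def u_def by simp
  have Nyx: "N (y - x) = t / 2"
  proof -
    have e: "y - x = (- l) *\<^sub>R u" unfolding y_def u_def by (simp add: algebra_simps)
    have "N (y - x) = N ((- l) *\<^sub>R u)" by (simp only: e)
    also have "\<dots> = \<bar>- l\<bar> * N u" by (rule N0(3))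
    also have "\<dots> = t / 2" using l0 ltau \<tau>_def by simp
    finally show ?thesis .
  qed
  define Bx where "Bx = nball N x t"
  define By where "By = nball N y s"
  have sub: "By \<subseteq> Bx"
  proof
    fix z assume "z \<in> By"
    then have "N (z - y) \<le> s" unfolding By_def nball_def by simp
    moreover have "N ((z - y) + (y - x)) \<le> N (z - y) + N (y - x)" by (rule N0(4))
    ultimately show "z \<in> Bx" unfolding Bx_def nball_def using Nyx st by simp
  qed
  have fz: "f z \<ge> M * f x" if "z \<in> By \<inter> A - {a1}" for z
  proof (rule ar(4))
    show "x \<in> A - {a1}" using xA xa by simp
    show "z \<in> A - {a1}" using that by simp
    have "N (z - y) \<le> s" using that unfolding By_def nball_def by simp
    then have "N0 (z - y) \<le> C0 * s" using eq1[of "z - y"] C0 by (smt (verit) mult_left_mono)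
    also have "C0 * s = t / (2 * C0)" unfolding s_def using C0 by (simp add: power2_eq_square)
    finally have a: "N0 (z - y) \<le> t / (2 * C0)" .
    have b: "N0 (y - a1) = (1 - l) * N0 u" unfolding y_def using M0(2) l0 by simp
    have "\<tau> \<le> C0 * N0 u" using eq2 \<tau>_def by simp
    then have "\<tau> / C0 \<le> N0 u" using C0 by (simp add: divide_le_eq mult.commute)
    then have "l * (\<tau> / C0) \<le> l * N0 u" using l0 by (intro mult_left_mono) auto
    moreover have "l * (\<tau> / C0) = t / (2 * C0)" by (simp only: times_divide_eq_right ltau divide_divide_eq_left)
    ultimately have c: "t / (2 * C0) \<le> l * N0 u" by simp
    have "N0 ((z - y) + (y - a1)) \<le> N0 (z - y) + N0 (y - a1)" by (rule M0(3))
    then show "N0 (z - a1) \<le> N0 (x - a1)" using a b c u_def by (simp add: algebra_simps)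
  qed
  have ratio: "p \<le> measure lborel (By \<inter> A) / measure lborel By"
    unfolding p_def frak_p_def
  proof (rule cInf_lower)
    show "measure lborel (By \<inter> A) / measure lborel By \<in> {measure lborel (nball N x t \<inter> A) / measure lborel (nball N x t) | x t.
                         x \<in> A \<and> 0 < t \<and> t \<le> N (x - a1)}"
      using yA s0 sy unfolding By_def by blast
    show "bdd_below {measure lborel (nball N x t \<inter> A) / measure lborel (nball N x t) | x t.
                         x \<in> A \<and> 0 < t \<and> t \<le> N (x - a1)}"
      by (rule bdd_belowI[of _ 0]) auto
  qed
  have p0: "0 < p" using assms(5) p_def by simp
  have "measure lborel By \<noteq> 0"
  proof
    assume "measure lborel By = 0"
    then show False using ratio p0 by simp
  qed
  then have mBy: "measure lborel By > 0" using measure_nonneg[of lborel By] by linarith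
  have By_b: "By \<in> sets borel" unfolding By_def by (rule nball_borel[OF nN])
  have Bx_b: "Bx \<in> sets borel" unfolding Bx_def by (rule nball_borel[OF nN])
  have ByA_b: "By \<inter> A \<in> sets borel" using By_b assms(2) by simp
  have finBy: "emeasure lborel By \<noteq> top"
  proof
    assume "emeasure lborel By = top"
    then have "measure lborel By = 0" by (simp add: measure_def)
    then show False using mBy by simp
  qed
  have "emeasure lborel (By \<inter> A) \<le> emeasure lborel By" by (rule emeasure_mono) (auto simp: By_b)
  then have finByA: "emeasure lborel (By \<inter> A) \<noteq> top" using finBy by (auto simp: top_unique)
  have dens: "measure lborel (By \<inter> A) \<ge> p * measure lborel By" using ratio mBy by (simp add: le_divide_eq)
  have imgeq: "By = (\<lambda>w. s *\<^sub>R w + y) ` nball N 0 1"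
  proof (intro set_eqI iffI)
    fix z assume "z \<in> By"
    then have "N (z - y) \<le> s" unfolding By_def nball_def by simp
    then have "N ((1/s) *\<^sub>R (z - y)) \<le> 1" using N0(3) s0 by (simp add: divide_le_eq)
    moreover have "z = s *\<^sub>R ((1/s) *\<^sub>R (z - y)) + y" using s0 by simp
    ultimately show "z \<in> (\<lambda>w. s *\<^sub>R w + y) ` nball N 0 1" unfolding nball_def by force
  next
    fix z assume "z \<in> (\<lambda>w. s *\<^sub>R w + y) ` nball N 0 1"
    then obtain w where "N w \<le> 1" "z = s *\<^sub>R w + y" unfolding nball_def by auto
    then show "z \<in> By" unfolding By_def nball_def using N0(3) s0 by (simp add: mult_left_le)
  qed
  have volBy: "measure lborel By = s ^ d * V"
  proof -
    have nb: "nball N 0 1 \<in> sets borel" by (rule nball_borel[OF nN])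
    have "measure lebesgue By = \<bar>s\<bar> ^ d * measure lebesgue (nball N 0 1)"
      unfolding imgeq d_def by (rule measure_lebesgue_affine)
    then show ?thesis using nb By_b s0 unfolding V_def unit_ball_vol_def by simp
  qed
  have fmeas[measurable]: "f \<in> borel_measurable borel" by fact
  define S where "S = By \<inter> A - {a1}"
  have S_b: "S \<in> sets borel" unfolding S_def using ByA_b by simp
  have "ennreal (M * f x * measure lborel (By \<inter> A)) = ennreal (M * f x) * emeasure lborel (By \<inter> A)"
    using ar(2) assms(6)[of x] emeasure_eq_ennreal_measure[OF finByA] by (simp add: ennreal_mult)
  also have "emeasure lborel (By \<inter> A) = emeasure lborel S"
    unfolding S_def using ByA_b by (intro emeasure_Diff_null_set[symmetric]) auto
  also have "ennreal (M * f x) * emeasure lborel S = (\<integral>\<^sup>+z. ennreal (M * f x) * indicator S z \<partial>lborel)"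
    using S_b by (intro nn_integral_cmult_indicator[symmetric]) auto
  also have "\<dots> \<le> (\<integral>\<^sup>+z. ennreal (f z) * indicator S z \<partial>lborel)"
    apply (rule nn_integral_mono) using fz unfolding S_def by (auto split: split_indicator intro!: ennreal_leI)
  also have "\<dots> = emeasure \<nu> S"
    unfolding \<nu>_def using S_b by (intro emeasure_density[symmetric]) auto
  also have "\<dots> \<le> emeasure \<nu> Bx"
    apply (rule emeasure_mono) using sub S_def Bx_b unfolding \<nu>_def by auto
  finally have E: "ennreal (M * f x * measure lborel (By \<inter> A)) \<le> emeasure \<nu> Bx" .
  have finx: "emeasure \<nu> Bx \<noteq> top"
  proof -
    have "emeasure \<nu> Bx \<le> emeasure \<nu> UNIV" by (rule emeasure_mono) (auto simp: \<nu>_def)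
    then show ?thesis using assms(8) unfolding \<nu>_def by (auto simp: top_unique)
  qed
  have L: "M * f x * measure lborel (By \<inter> A) \<le> measure \<nu> Bx"
    using E emeasure_eq_ennreal_measure[OF finx] by (simp add: ennreal_le_iff)
  have "M * f x * (p * (s ^ d * V)) \<le> M * f x * measure lborel (By \<inter> A)"
    using dens volBy ar(2) assms(6)[of x] by (intro mult_left_mono) auto
  also note L
  finally have F: "M * f x * (p * (s ^ d * V)) \<le> measure \<nu> Bx" .
  have sd: "s ^ d = (2 * C0\<^sup>2) powr (- real d) * t ^ d"
  proof -
    have pos: "0 < 2 * C0\<^sup>2" using C0 by simp
    have e1: "(2 * C0\<^sup>2) powr (- real d) = inverse ((2 * C0\<^sup>2) ^ d)"
      using pos by (simp add: powr_minus powr_realpow)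
    have e2: "s ^ d = t ^ d / (2 * C0\<^sup>2) ^ d" unfolding s_def by (rule power_divide)
    show ?thesis unfolding e1 e2 divide_inverse by (rule mult.commute)
  qed
  have G: "M * p * ((2 * C0\<^sup>2) powr (- real d)) * V * f x * t ^ d = M * f x * (p * (s ^ d * V))"
    unfolding sd by (simp only: ac_simps)
  show "M * frak_p A N a1 * (2 * C0\<^sup>2) powr (- real DIM('a)) * unit_ball_vol N * f x * t ^ DIM('a)
        \<le> measure (density lborel (\<lambda>x. ennreal (f x))) (nball N x t)"
    using F unfolding G[unfolded p_def V_def d_def, symmetric] p_def V_def \<nu>_def Bx_def d_def .
qed
end
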